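(* Fix $K\ge 1$ classes, and for each class $k\in\{1,\dots,K\}$ a decomposable stratified graph $G_L^k$ on the feature set $\Delta$, with its clique and separator factor structures as described in the context. Fix a test data set $\mathbf{X}^T$ of $n$ observations and a labeling $T\in\{1,\dots,K\}^n$ of the test data. Let the training data grow, and suppose that for every class $k$, every clique $C\in\mathcal{C}(G_L^k)$ and every separator $S\in\mathcal{S}(G_L^k)$, and every index triple $(j,i,l)$ of the corresponding factor, the training count $m(x_j^i\mid\pi_j^l)$ computed from $\mathbf{X}^{R,k}$ tends to $\infty$ (so that every updated hyperparameter $\beta_{jil}=\alpha_{jil}+m(x_j^i\mid \pi_j^l)\to\infty$). This holds, for example, almost surely when the training data of each class are an i.i.d. sample of size tending to infinity from a distribution under which all these cells have strictly positive probability. Then \[ \log P_{\mathrm{sim}}(T\mid \mathbf{X}^T,\mathbf{X}^R,R,G_L^A)-\log P_{\mathrm{mar}}(T\mid \mathbf{X}^T,\mathbf{X}^R,R,G_L^A)\longrightarrow 0 . \] That is, the marginal and simultaneous predictive SGM classifiers are asymptotically equivalent as the size of the training data goes to infinity.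
   Context: All features $X_\delta$, $\delta\in\Delta$, are binary (more generally finite categorical, variable $X_j$ having $k_j$ outcomes). Stratified graphs. For an undirected graph $G=(\Delta,E)$ and an edge $\{\delta,\gamma\}\in E$, let $L_{\{\delta,\gamma\}}$ be the set of nodes adjacent to both $\delta$ and $\gamma$. A stratum of the edge is a set $\mathcal{L}_{\{\delta,\gamma\}}$ of outcomes $x_{L_{\{\delta,\gamma\}}}$ for which $X_\delta\perp X_\gamma\mid X_{L_{\{\delta,\gamma\}}}=x_{L_{\{\delta,\gamma\}}}$. A stratified graph (SG) $G_L$ is a pair $(G,L)$, where $L$ is the collection of strata attached to edges of $G$. It is decomposable if $G$ is decomposable (chordal), no stratified edge lies in a separator of $G$, and within each clique $C$ all stratified edges share at least one common node. Factor formula. For a clique $C$ (or separator $S$) with $d$ variables, order them $X_1,\dots,X_d$, where, if $C$ contains stratified edges, $X_d$ is a node common to all of them. For $j<d$, and for $j=d$ when there are no strata, the parent outcomes (outcomes of $X_1,\dots,X_{j-1}$) are each their own group. For $j=d$ with strata, the outcomes of $X_1,\dots,X_{d-1}$ are partitioned into $q_d$ groups: each outcome $x$ in the stratum of an edge $\{d',d\}$ merges the two parent outcomes that agree with $x$ on the common neighbours and differ only in $X_{d'}$, and groups are the resulting equivalence classes. Let $q_j$ be the number of groups for $X_j$. For a data matrix $\mathbf{Y}$ on the variables of $C$, let $n(\pi_j^l)$ be the number of rows whose parent outcome lies in group $l$, and $n(x_j^i\mid\pi_j^l)$ the number of those rows in which $X_j=i$. For positive hyperparameters $\beta_{jil}$,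 \[ P_C(\mathbf{Y})=\prod_{j=1}^{d}\prod_{l=1}^{q_j}\frac{\Gamma(\sum_{i=1}^{k_j}\beta_{jil})}{\Gamma(n(\pi_j^l)+\sum_{i=1}^{k_j}\beta_{jil})}\prod_{i=1}^{k_j}\frac{\Gamma(n(x_j^i\mid\pi_j^l)+\beta_{jil})}{\Gamma(\beta_{jil})}, \] and analogously for $P_S$. Predictive scores. Training data $\mathbf{X}^R$ consist of $m$ observations with class labels $R$, and $\mathbf{X}^{R,k}$ denotes the training data of class $k$. In the posterior predictive version $P_C(\cdot\mid \mathbf{X}^{R,k})$ one uses $\beta_{jil}=\alpha_{jil}+m(x_j^i\mid\pi_j^l)$, where $\alpha_{jil}>0$ are fixed prior hyperparameters and $m(x_j^i\mid\pi_j^l)$ is the corresponding count in $\mathbf{X}^{R,k}$. Write $G_L^A=(G_L^1,\dots,G_L^K)$. Let $\mathbf{X}_i^T$ be the $i$-th test observation, and $\mathbf{X}^{T,k}$ the test observations assigned to class $k$ by $T$. Subscripts $C$ and $S$ denote restriction to the variables in $C$ or $S$. Then \[ P_{\mathrm{mar}}(T\mid\cdot)=\prod_{i=1}^n\frac{\prod_{C\in\mathcal{C}(G_L^{T(i)})}P_C(\mathbf{X}^T_{i,C}\mid \mathbf{X}^{R,T(i)})}{\prod_{S\in\mathcal{S}(G_L^{T(i)})}P_S(\mathbf{X}^T_{i,S}\mid \mathbf{X}^{R,T(i)})},\qquad P_{\mathrm{sim}}(T\mid\cdot)=\prod_{k=1}^K\frac{\prod_{C\in\mathcal{C}(G_L^{k})}P_C(\mathbf{X}^{T,k}_{C}\mid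 \mathbf{X}^{R,k})}{\prod_{S\in\mathcal{S}(G_L^{k})}P_S(\mathbf{X}^{T,k}_{S}\mid \mathbf{X}^{R,k})}. \] The marginal, respectively simultaneous, classifier chooses the $T$ maximizing $P_{\mathrm{mar}}$, respectively $P_{\mathrm{sim}}$. *)

theory Defs
  imports "HOL-Analysis.Analysis"
begin

text \<open>Observations: an outcome for every variable; variable v has outcomes 0 ..< kk v.\<close>
type_synonym 'v obs = "'v \<Rightarrow> nat"

definition is_graph :: "'v set \<Rightarrow> 'v set set \<Rightarrow> bool" where
  "is_graph \<Delta> E \<longleftrightarrow> finite \<Delta> \<and> (\<forall>e\<in>E. \<exists>u v. u \<noteq> v \<and> u \<in> \<Delta> \<and> v \<in> \<Delta> \<and> e = {u, v})"

definition complete_set :: "'v set set \<Rightarrow> 'v set \<Rightarrow> bool" where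
  "complete_set E A \<longleftrightarrow> (\<forall>u\<in>A. \<forall>v\<in>A. u \<noteq> v \<longrightarrow> {u, v} \<in> E)"

definition max_cliques :: "'v set \<Rightarrow> 'v set set \<Rightarrow> 'v set set" where
  "max_cliques \<Delta> E = {A. A \<subseteq> \<Delta> \<and> A \<noteq> {} \<and> complete_set E A \<and>
                         (\<forall>B. A \<subset> B \<and> B \<subseteq> \<Delta> \<longrightarrow> \<not> complete_set E B)}"

definition chordless_cycle :: "'v set set \<Rightarrow> 'v list \<Rightarrow> bool" where
  "chordless_cycle E cyc \<longleftrightarrow> length cyc \<ge> 4 \<and> distinct cyc \<and>
     (\<forall>i<length cyc. \<forall>j<length cyc. i \<noteq> j \<longrightarrow>
        ({cyc ! i, cyc ! j} \<in> E \<longleftrightarrow>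
           (j = Suc i mod length cyc \<or> i = Suc j mod length cyc)))"

definition chordal :: "'v set set \<Rightarrow> bool" where
  "chordal E \<longleftrightarrow> \<not> (\<exists>cyc. chordless_cycle E cyc)"

definition perfect_seq :: "'v set \<Rightarrow> 'v set set \<Rightarrow> 'v set list \<Rightarrow> bool" where
  "perfect_seq \<Delta> E cs \<longleftrightarrow> distinct cs \<and> set cs = max_cliques \<Delta> E \<and>
     (\<forall>j. 0 < j \<and> j < length cs \<longrightarrow> (\<exists>i<j. cs ! j \<inter> \<Union> (set (take j cs)) \<subseteq> cs ! i))"

text \<open>The separators (as a list, i.e. with multiplicity) of a perfect sequence.\<close>
definition seps :: "'v set list \<Rightarrow> 'v set list" where
  "seps cs = map (\<lambda>j. cs ! j \<inter> \<Union> (set (take j cs))) [1..<length cs]"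

definition common_nbrs :: "'v set \<Rightarrow> 'v set set \<Rightarrow> 'v \<Rightarrow> 'v \<Rightarrow> 'v set" where
  "common_nbrs \<Delta> E u v = {w\<in>\<Delta>. {w, u} \<in> E \<and> {w, v} \<in> E}"

text \<open>Strata: Lst e is the stratum of edge e, a set of outcomes of the variables in
  the common neighbourhood of the edge (only the values on that set matter).\<close>
definition stratified_edge :: "'v set set \<Rightarrow> ('v set \<Rightarrow> 'v obs set) \<Rightarrow> 'v set \<Rightarrow> bool" where
  "stratified_edge E Lst e \<longleftrightarrow> e \<in> E \<and> Lst e \<noteq> {}"

definition is_SG :: "'v set \<Rightarrow> ('v \<Rightarrow> nat) \<Rightarrow> 'v set set \<Rightarrow> ('v set \<Rightarrow> 'v obs set) \<Rightarrow> bool" where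
  "is_SG \<Delta> kk E Lst \<longleftrightarrow> is_graph \<Delta> E \<and> (\<forall>e. Lst e \<noteq> {} \<longrightarrow> e \<in> E) \<and>
     (\<forall>u v. \<forall>x\<in>Lst {u, v}. \<forall>w\<in>common_nbrs \<Delta> E u v. x w < kk w)"

definition decomposable_SG :: "'v set \<Rightarrow> ('v \<Rightarrow> nat) \<Rightarrow> 'v set set \<Rightarrow> ('v set \<Rightarrow> 'v obs set) \<Rightarrow> bool" where
  "decomposable_SG \<Delta> kk E Lst \<longleftrightarrow> is_SG \<Delta> kk E Lst \<and> chordal E \<and>
     (\<forall>cs. perfect_seq \<Delta> E cs \<longrightarrow>
        (\<forall>S\<in>set (seps cs). \<forall>e. stratified_edge E Lst e \<longrightarrow> \<not> e \<subseteq> S)) \<and>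
     (\<forall>C\<in>max_cliques \<Delta> E. \<exists>v. \<forall>e. stratified_edge E Lst e \<and> e \<subseteq> C \<longrightarrow> v \<in> e)"

definition valid_order :: "'v set set \<Rightarrow> ('v set \<Rightarrow> 'v obs set) \<Rightarrow> 'v set \<Rightarrow> 'v list \<Rightarrow> bool" where
  "valid_order E Lst F vo \<longleftrightarrow> distinct vo \<and> set vo = F \<and>
     (\<forall>e. stratified_edge E Lst e \<and> e \<subseteq> F \<longrightarrow> last vo \<in> e)"

text \<open>Parent outcomes of the (0-based) j-th variable: outcomes of vo!0, ..., vo!(j-1).\<close>
definition par_space :: "('v \<Rightarrow> nat) \<Rightarrow> 'v list \<Rightarrow> nat \<Rightarrow> nat list set" where
  "par_space kk vo j = {xs. length xs = j \<and> (\<forall>t<j. xs ! t < kk (vo ! t))}"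

definition parent :: "'v obs \<Rightarrow> 'v list \<Rightarrow> nat \<Rightarrow> nat list" where
  "parent y vo j = map y (take j vo)"

text \<open>Merging of parent outcomes of the last variable induced by the strata.\<close>
definition merge_rel :: "'v set \<Rightarrow> 'v set set \<Rightarrow> ('v set \<Rightarrow> 'v obs set) \<Rightarrow> ('v \<Rightarrow> nat) \<Rightarrow>
    'v list \<Rightarrow> (nat list \<times> nat list) set" where
  "merge_rel \<Delta> E Lst kk vo =
    {(ys, zs). ys \<in> par_space kk vo (length vo - 1) \<and> zs \<in> par_space kk vo (length vo - 1) \<and>
      (\<exists>t < length vo - 1. \<exists>x\<in>Lst {vo ! t, last vo}.
         (\<forall>s < length vo - 1. vo ! s \<in> common_nbrs \<Delta> E (vo ! t) (last vo) \<longrightarrow> ys ! s = x (vo ! s)) \<and>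
         (\<forall>s < length vo - 1. s \<noteq> t \<longrightarrow> ys ! s = zs ! s) \<and> ys ! t \<noteq> zs ! t)}"

definition groups :: "'v set \<Rightarrow> 'v set set \<Rightarrow> ('v set \<Rightarrow> 'v obs set) \<Rightarrow> ('v \<Rightarrow> nat) \<Rightarrow>
    'v list \<Rightarrow> nat \<Rightarrow> nat list set set" where
  "groups \<Delta> E Lst kk vo j =
     par_space kk vo j //
       (if Suc j = length vo then (merge_rel \<Delta> E Lst kk vo \<union> (merge_rel \<Delta> E Lst kk vo)\<inverse>)\<^sup>* else Id)"

definition cnt :: "'v list \<Rightarrow> nat \<Rightarrow> 'v obs list \<Rightarrow> nat list set \<Rightarrow> nat" where
  "cnt vo j Ys Q = length (filter (\<lambda>y. parent y vo j \<in> Q) Ys)"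

definition cnti :: "'v list \<Rightarrow> nat \<Rightarrow> 'v obs list \<Rightarrow> nat \<Rightarrow> nat list set \<Rightarrow> nat" where
  "cnti vo j Ys i Q = length (filter (\<lambda>y. parent y vo j \<in> Q \<and> y (vo ! j) = i) Ys)"

text \<open>P_F(Y) with hyperparameters beta j i Q (j 0-based variable index, i outcome, Q group).\<close>
definition factor_prob :: "'v set \<Rightarrow> 'v set set \<Rightarrow> ('v set \<Rightarrow> 'v obs set) \<Rightarrow> ('v \<Rightarrow> nat) \<Rightarrow>
    'v list \<Rightarrow> (nat \<Rightarrow> nat \<Rightarrow> nat list set \<Rightarrow> real) \<Rightarrow> 'v obs list \<Rightarrow> real" where
  "factor_prob \<Delta> E Lst kk vo \<beta> Ys =
     (\<Prod>j<length vo. \<Prod>Q\<in>groups \<Delta> E Lst kk vo j.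
        Gamma (\<Sum>i<kk (vo ! j). \<beta> j i Q) / Gamma (real (cnt vo j Ys Q) + (\<Sum>i<kk (vo ! j). \<beta> j i Q)) *
        (\<Prod>i<kk (vo ! j). Gamma (real (cnti vo j Ys i Q) + \<beta> j i Q) / Gamma (\<beta> j i Q)))"

definition pred_factor :: "'v set \<Rightarrow> 'v set set \<Rightarrow> ('v set \<Rightarrow> 'v obs set) \<Rightarrow> ('v \<Rightarrow> nat) \<Rightarrow>
    'v list \<Rightarrow> (nat \<Rightarrow> nat \<Rightarrow> nat list set \<Rightarrow> real) \<Rightarrow> 'v obs list \<Rightarrow> 'v obs list \<Rightarrow> real" where
  "pred_factor \<Delta> E Lst kk vo \<alpha> Dtr Ys =
     factor_prob \<Delta> E Lst kk vo (\<lambda>j i Q. \<alpha> j i Q + real (cnti vo j Dtr i Q)) Ys"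

definition class_score :: "'v set \<Rightarrow> ('v \<Rightarrow> nat) \<Rightarrow> 'v set set \<Rightarrow> ('v set \<Rightarrow> 'v obs set) \<Rightarrow>
    'v set list \<Rightarrow> ('v set \<Rightarrow> 'v list) \<Rightarrow> ('v set \<Rightarrow> nat \<Rightarrow> nat \<Rightarrow> nat list set \<Rightarrow> real) \<Rightarrow>
    'v obs list \<Rightarrow> 'v obs list \<Rightarrow> real" where
  "class_score \<Delta> kk E Lst cs ord \<alpha> Dtr Ys =
     prod_list (map (\<lambda>C. pred_factor \<Delta> E Lst kk (ord C) (\<alpha> C) Dtr Ys) cs) /
     prod_list (map (\<lambda>S. pred_factor \<Delta> E Lst kk (ord S) (\<alpha> S) Dtr Ys) (seps cs))"

definition class_data :: "('v obs \<times> nat) list \<Rightarrow> nat \<Rightarrow> 'v obs list" where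
  "class_data D k = map fst (filter (\<lambda>p. snd p = k) D)"

definition P_mar where
  "P_mar \<Delta> kk E Lst cs ord \<alpha> XR XT T =
     (\<Prod>i<length XT. class_score \<Delta> kk (E (T ! i)) (Lst (T ! i)) (cs (T ! i)) (ord (T ! i))
                         (\<alpha> (T ! i)) (class_data XR (T ! i)) [XT ! i])"

definition P_sim where
  "P_sim K \<Delta> kk E Lst cs ord \<alpha> XR XT T =
     (\<Prod>k\<in>{1..K}. class_score \<Delta> kk (E k) (Lst k) (cs k) (ord k) (\<alpha> k)
                         (class_data XR k) (class_data (zip XT T) k))"

end

theory Submission
  imports Defs
begin
lemma ln1_lim: "((\<lambda>x::real. ln (real n + x) - ln x) \<longlongrightarrow> 0) at_top"
proof -
  have "((\<lambda>x::real. ln (1 + real n / x)) \<longlongrightarrow> ln (1 + 0)) at_top"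
    by (intro tendsto_ln tendsto_add tendsto_const tendsto_divide_0[OF tendsto_const] filterlim_at_top_imp_at_infinity filterlim_ident) simp_all
  moreover have "\<forall>\<^sub>F x in at_top. ln (1 + real n / x) = ln (real n + x) - ln (x::real)"
    using eventually_gt_at_top[of 0]
  proof eventually_elim
    case (elim x)
    have "1 + real n / x = (real n + x) / x" using elim by (simp add: field_simps)
    then show ?case using elim by (simp add: ln_div)
  qed
  ultimately show ?thesis by (simp add: tendsto_cong)
qed

lemma gamma_ratio_lim: "((\<lambda>x::real. ln (Gamma (real n + x)) - ln (Gamma x) - real n * ln x) \<longlongrightarrow> 0) at_top"
proof (induction n)
  case 0 then show ?case by simp
next
  case (Suc n)
  have "((\<lambda>x::real. (ln (Gamma (real n + x)) - ln (Gamma x) - real n * ln x) + (ln (real n + x) - ln x)) \<longlongrightarrow> 0 + 0) at_top"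
    by (intro tendsto_add Suc ln1_lim)
  moreover have "\<forall>\<^sub>F x in at_top. (ln (Gamma (real n + x)) - ln (Gamma x) - real n * ln x) + (ln (real n + x) - ln x)
     = ln (Gamma (real (Suc n) + x)) - ln (Gamma x) - real (Suc n) * ln (x::real)"
    using eventually_gt_at_top[of 0]
  proof eventually_elim
    case (elim x)
    have nz: "real n + x \<notin> \<int>\<^sub>\<le>\<^sub>0" using elim
      by (metis add_nonneg_pos linorder_not_le nonpos_Ints_nonpos of_nat_0_le_iff)
    have "Gamma (real (Suc n) + x) = (real n + x) * Gamma (real n + x)"
      using Gamma_plus1[OF nz] by (metis add.commute add.left_commute of_nat_Suc)
    then have "ln (Gamma (real (Suc n) + x)) = ln ((real n + x) * Gamma (real n + x))"
      by (simp only:)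
    moreover have gp: "Gamma (real n + x) > 0" using elim by (intro Gamma_real_pos) simp
    ultimately have "ln (Gamma (real (Suc n) + x)) = ln (real n + x) + ln (Gamma (real n + x))"
      using elim gp ln_mult_pos[of "real n + x" "Gamma (real n + x)"] by simp
    moreover have "real (Suc n) * ln x = real n * ln x + ln x" by (simp add: algebra_simps)
    ultimately show ?case by linarith
  qed
  ultimately show ?case by (simp add: tendsto_cong)
qed

lemma gamma_ratio_seq:
  assumes "filterlim f at_top sequentially"
  shows "(\<lambda>N. ln (Gamma (real n + f N)) - ln (Gamma (f N)) - real n * ln (f N)) \<longlonglongrightarrow> 0"
  using filterlim_compose[OF gamma_ratio_lim assms] by simp


lemma ln_prod_pos: "(\<And>i. i \<in> I \<Longrightarrow> (f i::real) > 0) \<Longrightarrow> ln (prod f I) = (\<Sum>i\<in>I. ln (f i))"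
  using ln_prod[of I f] by (cases "finite I") force+

definition Lf :: "('v \<Rightarrow> nat) \<Rightarrow> 'v list \<Rightarrow> (nat \<Rightarrow> nat list set set) \<Rightarrow>
    (nat \<Rightarrow> nat \<Rightarrow> nat list set \<Rightarrow> real) \<Rightarrow> 'v obs list \<Rightarrow> real" where
  "Lf kk vo G \<beta> Ys = (\<Sum>j<length vo. \<Sum>Q\<in>G j.
     (\<Sum>i<kk (vo ! j). real (cnti vo j Ys i Q) * ln (\<beta> j i Q)) - real (cnt vo j Ys Q) * ln (\<Sum>i<kk (vo ! j). \<beta> j i Q))"

lemma Lf_append: "Lf kk vo G \<beta> (a @ b) = Lf kk vo G \<beta> a + Lf kk vo G \<beta> b"
  by (simp add: Lf_def cnti_def cnt_def sum.distrib[symmetric] algebra_simps)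

lemma Lf_Nil: "Lf kk vo G \<beta> [] = 0"
  by (simp add: Lf_def cnti_def cnt_def)

lemma ln_factor:
  assumes pos: "\<And>j i Q. j < length vo \<Longrightarrow> i < kk (vo!j) \<Longrightarrow> Q \<in> groups \<Delta> E Lst kk vo j \<Longrightarrow> 0 < \<beta> j i Q"
    and kpos: "\<And>j. j < length vo \<Longrightarrow> 0 < kk (vo!j)"
  shows "factor_prob \<Delta> E Lst kk vo \<beta> Ys > 0 \<and>
    ln (factor_prob \<Delta> E Lst kk vo \<beta> Ys) - Lf kk vo (groups \<Delta> E Lst kk vo) \<beta> Ys =
    (\<Sum>j<length vo. \<Sum>Q\<in>groups \<Delta> E Lst kk vo j.
       (\<Sum>i<kk (vo ! j). ln (Gamma (real (cnti vo j Ys i Q) + \<beta> j i Q)) - ln (Gamma (\<beta> j i Q))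
           - real (cnti vo j Ys i Q) * ln (\<beta> j i Q))
     - (ln (Gamma (real (cnt vo j Ys Q) + (\<Sum>i<kk (vo ! j). \<beta> j i Q))) - ln (Gamma (\<Sum>i<kk (vo ! j). \<beta> j i Q))
           - real (cnt vo j Ys Q) * ln (\<Sum>i<kk (vo ! j). \<beta> j i Q)))"
proof -
  let ?G = "groups \<Delta> E Lst kk vo"
  define X where "X j Q = Gamma (\<Sum>i<kk (vo ! j). \<beta> j i Q) / Gamma (real (cnt vo j Ys Q) + (\<Sum>i<kk (vo ! j). \<beta> j i Q)) *
        (\<Prod>i<kk (vo ! j). Gamma (real (cnti vo j Ys i Q) + \<beta> j i Q) / Gamma (\<beta> j i Q))" for j Q
  have Bpos: "0 < (\<Sum>i<kk (vo ! j). \<beta> j i Q)" if "j < length vo" "Q \<in> ?G j" for j Q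
    using kpos[OF that(1)] by (intro sum_pos) (use that pos in auto)
  have Xpos: "X j Q > 0" if "j < length vo" "Q \<in> ?G j" for j Q
    unfolding X_def using Bpos[OF that] pos that
    by (intro mult_pos_pos divide_pos_pos prod_pos Gamma_real_pos) (auto intro!: add_nonneg_pos)
  have lnX: "ln (X j Q) - ((\<Sum>i<kk (vo ! j). real (cnti vo j Ys i Q) * ln (\<beta> j i Q)) - real (cnt vo j Ys Q) * ln (\<Sum>i<kk (vo ! j). \<beta> j i Q)) =
     (\<Sum>i<kk (vo ! j). ln (Gamma (real (cnti vo j Ys i Q) + \<beta> j i Q)) - ln (Gamma (\<beta> j i Q))
           - real (cnti vo j Ys i Q) * ln (\<beta> j i Q))
     - (ln (Gamma (real (cnt vo j Ys Q) + (\<Sum>i<kk (vo ! j). \<beta> j i Q))) - ln (Gamma (\<Sum>i<kk (vo ! j). \<beta> j i Q))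
           - real (cnt vo j Ys Q) * ln (\<Sum>i<kk (vo ! j). \<beta> j i Q))"
    if "j < length vo" "Q \<in> ?G j" for j Q
  proof -
    have B: "0 < (\<Sum>i<kk (vo ! j). \<beta> j i Q)" using Bpos[OF that] .
    have bi: "\<And>i. i < kk (vo ! j) \<Longrightarrow> 0 < \<beta> j i Q" using pos that by auto
    have "ln (X j Q) = ln (Gamma (\<Sum>i<kk (vo ! j). \<beta> j i Q)) - ln (Gamma (real (cnt vo j Ys Q) + (\<Sum>i<kk (vo ! j). \<beta> j i Q)))
       + (\<Sum>i<kk (vo ! j). ln (Gamma (real (cnti vo j Ys i Q) + \<beta> j i Q)) - ln (Gamma (\<beta> j i Q)))"
    proof -
      have gi: "\<And>i. i \<in> {..<kk (vo ! j)} \<Longrightarrow> 0 < Gamma (real (cnti vo j Ys i Q) + \<beta> j i Q) / Gamma (\<beta> j i Q)"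
        using bi by (auto intro!: divide_pos_pos Gamma_real_pos add_nonneg_pos)
      have P: "ln (\<Prod>i<kk (vo ! j). Gamma (real (cnti vo j Ys i Q) + \<beta> j i Q) / Gamma (\<beta> j i Q))
         = (\<Sum>i<kk (vo ! j). ln (Gamma (real (cnti vo j Ys i Q) + \<beta> j i Q)) - ln (Gamma (\<beta> j i Q)))"
        using bi by (subst ln_prod_pos[OF gi]) (auto intro!: sum.cong ln_divide_pos Gamma_real_pos add_nonneg_pos)
      have g1: "0 < Gamma (\<Sum>i<kk (vo ! j). \<beta> j i Q) / Gamma (real (cnt vo j Ys Q) + (\<Sum>i<kk (vo ! j). \<beta> j i Q))"
        using B by (auto intro!: divide_pos_pos Gamma_real_pos add_nonneg_pos)
      have g2: "0 < (\<Prod>i<kk (vo ! j). Gamma (real (cnti vo j Ys i Q) + \<beta> j i Q) / Gamma (\<beta> j i Q))"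
        using gi by (rule prod_pos)
      show ?thesis unfolding X_def
      proof (subst ln_mult_pos[OF g1 g2])
        have "0 < real (cnt vo j Ys Q) + (\<Sum>i<kk (vo ! j). \<beta> j i Q)" using B by (intro add_nonneg_pos) auto
        then have "ln (Gamma (\<Sum>i<kk (vo ! j). \<beta> j i Q) / Gamma (real (cnt vo j Ys Q) + (\<Sum>i<kk (vo ! j). \<beta> j i Q)))
          = ln (Gamma (\<Sum>i<kk (vo ! j). \<beta> j i Q)) - ln (Gamma (real (cnt vo j Ys Q) + (\<Sum>i<kk (vo ! j). \<beta> j i Q)))"
          using B by (intro ln_divide_pos Gamma_real_pos)
        then show "ln (Gamma (\<Sum>i<kk (vo ! j). \<beta> j i Q) / Gamma (real (cnt vo j Ys Q) + (\<Sum>i<kk (vo ! j). \<beta> j i Q))) +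
          ln (\<Prod>i<kk (vo ! j). Gamma (real (cnti vo j Ys i Q) + \<beta> j i Q) / Gamma (\<beta> j i Q)) =
          ln (Gamma (\<Sum>i<kk (vo ! j). \<beta> j i Q)) - ln (Gamma (real (cnt vo j Ys Q) + (\<Sum>i<kk (vo ! j). \<beta> j i Q))) +
          (\<Sum>i<kk (vo ! j). ln (Gamma (real (cnti vo j Ys i Q) + \<beta> j i Q)) - ln (Gamma (\<beta> j i Q)))"
          using P by simp
      qed
    qed
    then show ?thesis by (simp add: sum_subtractf sum.distrib algebra_simps)
  qed
  have "factor_prob \<Delta> E Lst kk vo \<beta> Ys = (\<Prod>j<length vo. \<Prod>Q\<in>?G j. X j Q)"
    unfolding factor_prob_def X_def by simp
  moreover have "(\<Prod>j<length vo. \<Prod>Q\<in>?G j. X j Q) > 0"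
    using Xpos by (auto intro!: prod_pos)
  moreover have "ln (\<Prod>j<length vo. \<Prod>Q\<in>?G j. X j Q) = (\<Sum>j<length vo. \<Sum>Q\<in>?G j. ln (X j Q))"
  proof -
    have "ln (\<Prod>j<length vo. \<Prod>Q\<in>?G j. X j Q) = (\<Sum>j<length vo. ln (\<Prod>Q\<in>?G j. X j Q))"
      using Xpos by (intro ln_prod_pos prod_pos) auto
    also have "\<dots> = (\<Sum>j<length vo. \<Sum>Q\<in>?G j. ln (X j Q))"
      using Xpos by (intro sum.cong refl ln_prod_pos) auto
    finally show ?thesis .
  qed
  ultimately have fp: "factor_prob \<Delta> E Lst kk vo \<beta> Ys > 0"
    and eq: "ln (factor_prob \<Delta> E Lst kk vo \<beta> Ys) = (\<Sum>j<length vo. \<Sum>Q\<in>?G j. ln (X j Q))" by simp_all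
  have "ln (factor_prob \<Delta> E Lst kk vo \<beta> Ys) - Lf kk vo ?G \<beta> Ys =
     (\<Sum>j<length vo. \<Sum>Q\<in>?G j. ln (X j Q) - ((\<Sum>i<kk (vo ! j). real (cnti vo j Ys i Q) * ln (\<beta> j i Q)) - real (cnt vo j Ys Q) * ln (\<Sum>i<kk (vo ! j). \<beta> j i Q)))"
    unfolding eq Lf_def by (simp only: sum_subtractf)
  also have "\<dots> = (\<Sum>j<length vo. \<Sum>Q\<in>?G j.
       (\<Sum>i<kk (vo ! j). ln (Gamma (real (cnti vo j Ys i Q) + \<beta> j i Q)) - ln (Gamma (\<beta> j i Q))
           - real (cnti vo j Ys i Q) * ln (\<beta> j i Q))
     - (ln (Gamma (real (cnt vo j Ys Q) + (\<Sum>i<kk (vo ! j). \<beta> j i Q))) - ln (Gamma (\<Sum>i<kk (vo ! j). \<beta> j i Q))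
           - real (cnt vo j Ys Q) * ln (\<Sum>i<kk (vo ! j). \<beta> j i Q)))"
    apply (rule sum.cong[OF refl])
    apply (rule sum.cong[OF refl])
    apply (rule lnX)
    apply auto
    done
  finally show ?thesis using fp by simp
qed

lemma factor_lim:
  assumes pos: "\<And>N j i Q. j < length vo \<Longrightarrow> i < kk (vo!j) \<Longrightarrow> Q \<in> groups \<Delta> E Lst kk vo j \<Longrightarrow> 0 < \<beta> N j i Q"
    and kpos: "\<And>j. j < length vo \<Longrightarrow> 0 < kk (vo!j)"
    and lim: "\<And>j i Q. j < length vo \<Longrightarrow> i < kk (vo!j) \<Longrightarrow> Q \<in> groups \<Delta> E Lst kk vo j \<Longrightarrow>
               filterlim (\<lambda>N. \<beta> N j i Q) at_top sequentially"
  shows "factor_prob \<Delta> E Lst kk vo (\<beta> N) Ys > 0"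
    and "(\<lambda>N. ln (factor_prob \<Delta> E Lst kk vo (\<beta> N) Ys) - Lf kk vo (groups \<Delta> E Lst kk vo) (\<beta> N) Ys) \<longlonglongrightarrow> 0"
proof -
  let ?G = "groups \<Delta> E Lst kk vo"
  note lf = ln_factor[of vo kk \<Delta> E Lst "\<beta> N" Ys for N, OF pos kpos]
  show "factor_prob \<Delta> E Lst kk vo (\<beta> N) Ys > 0" using lf by blast
  have B: "filterlim (\<lambda>N. \<Sum>i<kk (vo ! j). \<beta> N j i Q) at_top sequentially"
    if "j < length vo" "Q \<in> ?G j" for j Q
  proof (rule filterlim_at_top_mono[OF lim[of j 0 Q]])
    show "\<forall>\<^sub>F N in sequentially. \<beta> N j 0 Q \<le> (\<Sum>i<kk (vo ! j). \<beta> N j i Q)"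
      using that kpos[OF that(1)] pos
      by (intro always_eventually allI member_le_sum) (auto intro: less_imp_le)
  qed (use that kpos in auto)
  have "(\<lambda>N. \<Sum>j<length vo. \<Sum>Q\<in>?G j.
       (\<Sum>i<kk (vo ! j). ln (Gamma (real (cnti vo j Ys i Q) + \<beta> N j i Q)) - ln (Gamma (\<beta> N j i Q))
           - real (cnti vo j Ys i Q) * ln (\<beta> N j i Q))
     - (ln (Gamma (real (cnt vo j Ys Q) + (\<Sum>i<kk (vo ! j). \<beta> N j i Q))) - ln (Gamma (\<Sum>i<kk (vo ! j). \<beta> N j i Q))
           - real (cnt vo j Ys Q) * ln (\<Sum>i<kk (vo ! j). \<beta> N j i Q))) \<longlonglongrightarrow> 0"
  proof (intro tendsto_null_sum)
    fix j Q assume j: "j \<in> {..<length vo}" and Q: "Q \<in> ?G j"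
    have "(\<lambda>N. (\<Sum>i<kk (vo ! j). ln (Gamma (real (cnti vo j Ys i Q) + \<beta> N j i Q)) - ln (Gamma (\<beta> N j i Q))
           - real (cnti vo j Ys i Q) * ln (\<beta> N j i Q))
     - (ln (Gamma (real (cnt vo j Ys Q) + (\<Sum>i<kk (vo ! j). \<beta> N j i Q))) - ln (Gamma (\<Sum>i<kk (vo ! j). \<beta> N j i Q))
           - real (cnt vo j Ys Q) * ln (\<Sum>i<kk (vo ! j). \<beta> N j i Q))) \<longlonglongrightarrow> 0 - 0"
      using j Q by (intro tendsto_diff tendsto_null_sum gamma_ratio_seq lim B) auto
    then show "(\<lambda>N. (\<Sum>i<kk (vo ! j). ln (Gamma (real (cnti vo j Ys i Q) + \<beta> N j i Q)) - ln (Gamma (\<beta> N j i Q))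
           - real (cnti vo j Ys i Q) * ln (\<beta> N j i Q))
     - (ln (Gamma (real (cnt vo j Ys Q) + (\<Sum>i<kk (vo ! j). \<beta> N j i Q))) - ln (Gamma (\<Sum>i<kk (vo ! j). \<beta> N j i Q))
           - real (cnt vo j Ys Q) * ln (\<Sum>i<kk (vo ! j). \<beta> N j i Q))) \<longlonglongrightarrow> 0" by simp
  qed
  then show "(\<lambda>N. ln (factor_prob \<Delta> E Lst kk vo (\<beta> N) Ys) - Lf kk vo ?G (\<beta> N) Ys) \<longlonglongrightarrow> 0"
    using lf by simp
qed

lemma prod_list_ln:
  assumes "\<And>x. x \<in> set xs \<Longrightarrow> (f x::real) > 0"
  shows "prod_list (map f xs) > 0 \<and> ln (prod_list (map f xs)) = sum_list (map (\<lambda>x. ln (f x)) xs)"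
  using assms by (induction xs) (auto simp: ln_mult_pos)

lemma tendsto_sum_list_null:
  assumes "\<And>x. x \<in> set xs \<Longrightarrow> (\<lambda>N. (f x N::real)) \<longlonglongrightarrow> 0"
  shows "(\<lambda>N. sum_list (map (\<lambda>x. f x N) xs)) \<longlonglongrightarrow> 0"
  using assms by (induction xs) (auto intro: tendsto_add_zero)

lemma class_split:
  assumes "length T = length XT" "\<forall>t\<in>set T. t \<in> {1..K}"
    and add: "\<And>k a b. h k (a @ b) = h k a + (h k b :: real)" and nil: "\<And>k. h k [] = 0"
  shows "(\<Sum>k\<in>{1..K}. h k (class_data (zip XT T) k)) = (\<Sum>i<length XT. h (T ! i) [XT ! i])"
  using assms(1)[symmetric] assms(2)
proof (induction XT T rule: list_induct2)
  case Nil then show ?case by (simp add: class_data_def nil)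
next
  case (Cons x xs t ts)
  have cd: "class_data (zip (x # xs) (t # ts)) k = (if t = k then [x] else []) @ class_data (zip xs ts) k" for k
    by (simp add: class_data_def)
  have hk: "h k (class_data (zip (x # xs) (t # ts)) k) = (if t = k then h k [x] else 0) + h k (class_data (zip xs ts) k)" for k
    unfolding cd add by (simp add: nil)
  have t: "t \<in> {1..K}" using Cons.prems by simp
  have "(\<Sum>k\<in>{1..K}. h k (class_data (zip (x # xs) (t # ts)) k)) = h t [x] + (\<Sum>k\<in>{1..K}. h k (class_data (zip xs ts) k))"
    unfolding hk sum.distrib using t by (simp add: sum.delta)
  also have "\<dots> = h t [x] + (\<Sum>i<length xs. h (ts ! i) [xs ! i])"
    using Cons by simp
  also have "\<dots> = (\<Sum>i<length (x # xs). h ((t # ts) ! i) [(x # xs) ! i])"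
    by (simp only: length_Cons sum.lessThan_Suc_shift) simp
  finally show ?case .
qed

theorem theorem1:
  fixes \<Delta> :: "'v set" and kk :: "'v \<Rightarrow> nat" and K :: nat
    and E :: "nat \<Rightarrow> 'v set set" and Lst :: "nat \<Rightarrow> 'v set \<Rightarrow> 'v obs set"
    and cs :: "nat \<Rightarrow> 'v set list" and ord :: "nat \<Rightarrow> 'v set \<Rightarrow> 'v list"
    and \<alpha> :: "nat \<Rightarrow> 'v set \<Rightarrow> nat \<Rightarrow> nat \<Rightarrow> nat list set \<Rightarrow> real"
    and XT :: "'v obs list" and T :: "nat list"
    and XR :: "nat \<Rightarrow> ('v obs \<times> nat) list"
  assumes "finite \<Delta>" and "K \<ge> 1" and "\<forall>v\<in>\<Delta>. 0 < kk v"
    and "\<forall>k\<in>{1..K}. decomposable_SG \<Delta> kk (E k) (Lst k) \<and> perfect_seq \<Delta> (E k) (cs k)"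
    and "\<forall>k\<in>{1..K}. \<forall>F\<in>set (cs k) \<union> set (seps (cs k)). valid_order (E k) (Lst k) F (ord k F)"
    and "\<forall>k\<in>{1..K}. \<forall>F\<in>set (cs k) \<union> set (seps (cs k)). \<forall>j<length (ord k F).
           \<forall>i<kk (ord k F ! j). \<forall>Q\<in>groups \<Delta> (E k) (Lst k) kk (ord k F) j. 0 < \<alpha> k F j i Q"
    and "length T = length XT" and "\<forall>t\<in>set T. t \<in> {1..K}"
    and "\<forall>x\<in>set XT. \<forall>v\<in>\<Delta>. x v < kk v"
    and "\<forall>N. \<forall>p\<in>set (XR N). (\<forall>v\<in>\<Delta>. fst p v < kk v) \<and> snd p \<in> {1..K}"
    and "\<forall>k\<in>{1..K}. \<forall>F\<in>set (cs k) \<union> set (seps (cs k)). \<forall>j<length (ord k F).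
           \<forall>i<kk (ord k F ! j). \<forall>Q\<in>groups \<Delta> (E k) (Lst k) kk (ord k F) j.
             filterlim (\<lambda>N. cnti (ord k F) j (class_data (XR N) k) i Q) at_top sequentially"
  shows "(\<lambda>N. ln (P_sim K \<Delta> kk E Lst cs ord \<alpha> (XR N) XT T)
              - ln (P_mar \<Delta> kk E Lst cs ord \<alpha> (XR N) XT T)) \<longlonglongrightarrow> 0"
proof -
  note A = assms
  define Fs where "Fs k = set (cs k) \<union> set (seps (cs k))" for k
  define \<beta> where "\<beta> k F N j i Q = \<alpha> k F j i Q + real (cnti (ord k F) j (class_data (XR N) k) i Q)" for k F N j i Q
  define G where "G k F = groups \<Delta> (E k) (Lst k) kk (ord k F)" for k F
  define pf where "pf k F N Ys = pred_factor \<Delta> (E k) (Lst k) kk (ord k F) (\<alpha> k F) (class_data (XR N) k) Ys" for k F N Ys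
  define Lf' where "Lf' k F N Ys = Lf kk (ord k F) (G k F) (\<beta> k F N) Ys" for k F N Ys
  define g where "g k F N Ys = ln (pf k F N Ys) - Lf' k F N Ys" for k F N Ys
  define Lc where "Lc k N Ys = sum_list (map (\<lambda>C. Lf' k C N Ys) (cs k)) - sum_list (map (\<lambda>S. Lf' k S N Ys) (seps (cs k)))" for k N Ys
  define Gc where "Gc k N Ys = sum_list (map (\<lambda>C. g k C N Ys) (cs k)) - sum_list (map (\<lambda>S. g k S N Ys) (seps (cs k)))" for k N Ys
  have pf_eq: "pf k F N Ys = factor_prob \<Delta> (E k) (Lst k) kk (ord k F) (\<beta> k F N) Ys" for k F N Ys
    unfolding pf_def pred_factor_def \<beta>_def by simp
  have Fsub: "F \<subseteq> \<Delta>" if k: "k \<in> {1..K}" and F: "F \<in> Fs k" for k F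
  proof -
    have ps: "perfect_seq \<Delta> (E k) (cs k)" using A(4) k by blast
    have csub: "C \<subseteq> \<Delta>" if "C \<in> set (cs k)" for C
      using ps that unfolding perfect_seq_def max_cliques_def by auto
    show ?thesis
    proof (cases "F \<in> set (cs k)")
      case True then show ?thesis by (rule csub)
    next
      case False
      then have "F \<in> set (seps (cs k))" using F unfolding Fs_def by auto
      then obtain j where "j < length (cs k)" "F = cs k ! j \<inter> \<Union> (set (take j (cs k)))"
        unfolding seps_def by auto
      then show ?thesis using csub[of "cs k ! j"] by auto
    qed
  qed
  have kposF: "0 < kk (ord k F ! j)" if k: "k \<in> {1..K}" and F: "F \<in> Fs k" and j: "j < length (ord k F)" for k F j
  proof -
    have "valid_order (E k) (Lst k) F (ord k F)" using A(5) k F unfolding Fs_def by blast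
    then have "set (ord k F) = F" unfolding valid_order_def by simp
    then have "ord k F ! j \<in> \<Delta>" using Fsub[OF k F] nth_mem[OF j] by auto
    then show ?thesis using A(3) by blast
  qed
  have posF: "0 < \<beta> k F N j i Q" if k: "k \<in> {1..K}" and F: "F \<in> Fs k" and "j < length (ord k F)"
      "i < kk (ord k F ! j)" "Q \<in> G k F j" for k F N j i Q
  proof -
    have "0 < \<alpha> k F j i Q" using A(6) k F that unfolding Fs_def G_def by blast
    then show ?thesis unfolding \<beta>_def by (intro add_pos_nonneg) auto
  qed
  have limF: "filterlim (\<lambda>N. \<beta> k F N j i Q) at_top sequentially" if k: "k \<in> {1..K}" and F: "F \<in> Fs k" and
      "j < length (ord k F)" "i < kk (ord k F ! j)" "Q \<in> G k F j" for k F j i Q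
  proof -
    have "filterlim (\<lambda>N. cnti (ord k F) j (class_data (XR N) k) i Q) at_top sequentially"
      using A(11) k F that unfolding Fs_def G_def by blast
    then have "filterlim (\<lambda>N. real (cnti (ord k F) j (class_data (XR N) k) i Q)) at_top sequentially"
      by (rule filterlim_compose[OF filterlim_real_sequentially])
    then show ?thesis unfolding \<beta>_def
      by (rule filterlim_tendsto_add_at_top[OF tendsto_const])
  qed
  have fl: "pf k F N Ys > 0 \<and> (\<lambda>N. g k F N Ys) \<longlonglongrightarrow> 0" if k: "k \<in> {1..K}" and F: "F \<in> Fs k" for k F N Ys
    using factor_lim[where vo="ord k F" and kk=kk and \<Delta>=\<Delta> and E="E k" and Lst="Lst k" and \<beta>="\<beta> k F", OF posF[OF k F] kposF[OF k F] limF[OF k F]]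
    unfolding g_def Lf'_def pf_eq G_def by blast
  have cs_ln: "class_score \<Delta> kk (E k) (Lst k) (cs k) (ord k) (\<alpha> k) (class_data (XR N) k) Ys > 0 \<and>
      ln (class_score \<Delta> kk (E k) (Lst k) (cs k) (ord k) (\<alpha> k) (class_data (XR N) k) Ys) = Lc k N Ys + Gc k N Ys"
    if k: "k \<in> {1..K}" for k N Ys
  proof -
    have p1: "\<And>C. C \<in> set (cs k) \<Longrightarrow> pf k C N Ys > 0" using fl[OF k] unfolding Fs_def by blast
    have p2: "\<And>C. C \<in> set (seps (cs k)) \<Longrightarrow> pf k C N Ys > 0" using fl[OF k] unfolding Fs_def by blast
    note l1 = prod_list_ln[of "cs k" "\<lambda>C. pf k C N Ys", OF p1]
    note l2 = prod_list_ln[of "seps (cs k)" "\<lambda>C. pf k C N Ys", OF p2]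
    have cseq: "class_score \<Delta> kk (E k) (Lst k) (cs k) (ord k) (\<alpha> k) (class_data (XR N) k) Ys =
        prod_list (map (\<lambda>C. pf k C N Ys) (cs k)) / prod_list (map (\<lambda>C. pf k C N Ys) (seps (cs k)))"
      unfolding class_score_def pf_def by simp
    have lnpf: "ln (pf k C N Ys) = Lf' k C N Ys + g k C N Ys" for C unfolding g_def by simp
    show ?thesis unfolding cseq using l1 l2
      by (simp add: ln_divide_pos lnpf sum_list_addf Lc_def Gc_def)
  qed
  have Lc_app: "Lc k N (a @ b) = Lc k N a + Lc k N b" for k N a b
    unfolding Lc_def Lf'_def Lf_append by (simp add: sum_list_addf)
  have Lc_nil: "Lc k N [] = 0" for k N
    unfolding Lc_def Lf'_def Lf_Nil by simp
  define Ysk where "Ysk k = class_data (zip XT T) k" for k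
  have Tk: "T ! i \<in> {1..K}" if "i < length XT" for i
    using A(7,8) that by (metis nth_mem)
  have sim: "ln (P_sim K \<Delta> kk E Lst cs ord \<alpha> (XR N) XT T) = (\<Sum>k\<in>{1..K}. Lc k N (Ysk k) + Gc k N (Ysk k))" for N
    unfolding P_sim_def Ysk_def using cs_ln by (subst ln_prod_pos) auto
  have mar: "ln (P_mar \<Delta> kk E Lst cs ord \<alpha> (XR N) XT T) = (\<Sum>i<length XT. Lc (T ! i) N [XT ! i] + Gc (T ! i) N [XT ! i])" for N
    unfolding P_mar_def using cs_ln Tk by (subst ln_prod_pos) auto
  have split: "(\<Sum>k\<in>{1..K}. Lc k N (Ysk k)) = (\<Sum>i<length XT. Lc (T ! i) N [XT ! i])" for N
    unfolding Ysk_def by (rule class_split[OF A(7,8)]) (rule Lc_app, rule Lc_nil)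
  have diff: "ln (P_sim K \<Delta> kk E Lst cs ord \<alpha> (XR N) XT T) - ln (P_mar \<Delta> kk E Lst cs ord \<alpha> (XR N) XT T)
     = (\<Sum>k\<in>{1..K}. Gc k N (Ysk k)) - (\<Sum>i<length XT. Gc (T ! i) N [XT ! i])" for N
    unfolding sim mar sum.distrib split by simp
  have Gc_lim: "(\<lambda>N. Gc k N Ys) \<longlonglongrightarrow> 0" if k: "k \<in> {1..K}" for k Ys
  proof -
    have "(\<lambda>N. Gc k N Ys) \<longlonglongrightarrow> 0 - 0" unfolding Gc_def
      using fl[OF k] unfolding Fs_def by (intro tendsto_diff tendsto_sum_list_null) auto
    then show ?thesis by simp
  qed
  have "(\<lambda>N. (\<Sum>k\<in>{1..K}. Gc k N (Ysk k)) - (\<Sum>i<length XT. Gc (T ! i) N [XT ! i])) \<longlonglongrightarrow> 0 - 0"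
    using Gc_lim Tk by (intro tendsto_diff tendsto_null_sum) auto
  then show ?thesis unfolding diff by simp
qed

end
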